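(* Let $n\ge 4$ be an integer, let $B_n$ be the boundary simplicial complex of the bipyramid over an $n$-gon (defined in the context), and let $I_{B_n}\subset k[x_0,\dots,x_{n+1}]$ be its Stanley-Reisner ideal. Then the Waldschmidt constant of $I_{B_n}$ is $$\gamma(I_{B_n})=\frac{n}{n-2}.$$
   Context: Let $k$ be a field and $n\ge 3$. The base $n$-gon $Q_n$ has vertices $1,\dots,n$ in cyclic order, so its edges are $\{i,i+1\}$ for $1\le i\le n-1$ and $\{n,1\}$. The bipyramid $B_n$ over $Q_n$ has two extra vertices $0$ (upper) and $n+1$ (lower); as a simplicial complex on $\{0,1,\dots,n+1\}$, $B_n$ is the boundary complex of the bipyramid, i.e. the complex whose facets are the triangles $\{0,i,j\}$ and $\{n+1,i,j\}$ for every edge $\{i,j\}$ of $Q_n$. The Stanley-Reisner ideal $I_{\Delta}$ of a simplicial complex $\Delta$ on $\{0,\dots,n+1\}$ is the ideal of $R=k[x_0,\dots,x_{n+1}]$ generated by the monomials $\prod_{i\in\tau}x_i$ with $\tau\notin\Delta$. For a homogeneous ideal $0\ne I\subseteq R$, the $m$-th symbolic power is $I^{(m)}=R\cap\bigcap_{P\in \mathrm{Ass}(I)} I^mR_P$, $\alpha(I)=\min\{t: I_t\neq 0\}$, and the Waldschmidt constant is $\gamma(I)=\lim_{m\to\infty}\alpha(I^{(m)})/m$. *)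

theory Defs
  imports "HOL-Analysis.Analysis" "HOL-Library.Poly_Mapping"
begin

text \<open>Multivariate polynomials over a field 'k in variables x_i (i :: nat):
  maps from monomials (finitely supported exponent vectors) to coefficients, with the
  convolution product of Poly_Mapping.\<close>

type_synonym 'k mpol = "(nat \<Rightarrow>\<^sub>0 nat) \<Rightarrow>\<^sub>0 'k"

definition polys :: "nat set \<Rightarrow> 'k::zero mpol set" where
  "polys V = {p. \<forall>m\<in>Poly_Mapping.keys p. Poly_Mapping.keys m \<subseteq> V}"

definition Var :: "nat \<Rightarrow> 'k::{zero,one} mpol" where
  "Var i = Poly_Mapping.single (Poly_Mapping.single i 1) 1"

definition sqfree_monomial :: "nat set \<Rightarrow> 'k::comm_semiring_1 mpol" where
  "sqfree_monomial \<tau> = (\<Prod>i\<in>\<tau>. Var i)"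

definition is_ideal :: "'a::comm_ring_1 set \<Rightarrow> 'a set \<Rightarrow> bool" where
  "is_ideal R I \<longleftrightarrow> I \<subseteq> R \<and> 0 \<in> I \<and> (\<forall>a\<in>I. \<forall>b\<in>I. a + b \<in> I)
      \<and> (\<forall>r\<in>R. \<forall>a\<in>I. r * a \<in> I)"

definition ideal_gen :: "'a::comm_ring_1 set \<Rightarrow> 'a set \<Rightarrow> 'a set" where
  "ideal_gen R G = {p. \<exists>A r. finite A \<and> A \<subseteq> G \<and> (\<forall>g\<in>A. r g \<in> R) \<and> p = (\<Sum>g\<in>A. r g * g)}"

definition ideal_pow :: "'a::comm_ring_1 set \<Rightarrow> 'a set \<Rightarrow> nat \<Rightarrow> 'a set" where
  "ideal_pow R I m = ideal_gen R {prod_list xs | xs. length xs = m \<and> set xs \<subseteq> I}"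

definition prime_ideal :: "'a::comm_ring_1 set \<Rightarrow> 'a set \<Rightarrow> bool" where
  "prime_ideal R P \<longleftrightarrow> is_ideal R P \<and> P \<noteq> R \<and>
      (\<forall>a\<in>R. \<forall>b\<in>R. a * b \<in> P \<longrightarrow> a \<in> P \<or> b \<in> P)"

definition Ass :: "'a::comm_ring_1 set \<Rightarrow> 'a set \<Rightarrow> 'a set set" where
  "Ass R I = {P. prime_ideal R P \<and> (\<exists>f\<in>R. P = {r\<in>R. r * f \<in> I})}"

text \<open>Symbolic power I^(m) = R \<inter> \<Inter>_{P \<in> Ass I} I^m R_P. For a domain R,
  f \<in> R lies in I^m R_P iff s f \<in> I^m for some s \<in> R - P.\<close>
definition symbolic_power :: "'a::comm_ring_1 set \<Rightarrow> 'a set \<Rightarrow> nat \<Rightarrow> 'a set" where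
  "symbolic_power R I m =
     {f\<in>R. \<forall>P\<in>Ass R I. \<exists>s\<in>R - P. s * f \<in> ideal_pow R I m}"

definition mon_deg :: "(nat \<Rightarrow>\<^sub>0 nat) \<Rightarrow> nat" where
  "mon_deg m = (\<Sum>i\<in>Poly_Mapping.keys m. Poly_Mapping.lookup m i)"

definition homogeneous_of :: "nat \<Rightarrow> 'k::zero mpol \<Rightarrow> bool" where
  "homogeneous_of t p \<longleftrightarrow> (\<forall>m\<in>Poly_Mapping.keys p. mon_deg m = t)"

definition alpha :: "'k::zero mpol set \<Rightarrow> nat" where
  "alpha J = (LEAST t. \<exists>p\<in>J. p \<noteq> 0 \<and> homogeneous_of t p)"

definition stanley_reisner :: "nat set \<Rightarrow> nat set set \<Rightarrow> 'k::comm_ring_1 mpol set" where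
  "stanley_reisner V \<Delta> = ideal_gen (polys V) {sqfree_monomial \<tau> | \<tau>. \<tau> \<subseteq> V \<and> \<tau> \<notin> \<Delta>}"

definition ngon_edges :: "nat \<Rightarrow> nat set set" where
  "ngon_edges n = {{i, i + 1} | i. 1 \<le> i \<and> i \<le> n - 1} \<union> {{n, 1}}"

definition bipyramid_facets :: "nat \<Rightarrow> nat set set" where
  "bipyramid_facets n = {insert 0 e | e. e \<in> ngon_edges n} \<union> {insert (n + 1) e | e. e \<in> ngon_edges n}"

definition bipyramid :: "nat \<Rightarrow> nat set set" where
  "bipyramid n = {\<sigma>. \<exists>F\<in>bipyramid_facets n. \<sigma> \<subseteq> F}"

end

theory Submission
  imports Defs
begin

lemma keys_add_nat: "Poly_Mapping.keys ((a::nat \<Rightarrow>\<^sub>0 nat) + b) = Poly_Mapping.keys a \<union> Poly_Mapping.keys b"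
  by (auto simp: in_keys_iff lookup_add)

lemma keys_add_sub: "Poly_Mapping.keys (a + b) \<subseteq> Poly_Mapping.keys a \<union> Poly_Mapping.keys b"
  by (rule keys_add)

lemma gen_sub:
  assumes "0 \<in> S" "\<And>a b. a \<in> S \<Longrightarrow> b \<in> S \<Longrightarrow> a + b \<in> S"
    "\<And>r g. r \<in> R \<Longrightarrow> g \<in> G \<Longrightarrow> r * g \<in> S"
  shows "ideal_gen R G \<subseteq> S"
proof
  fix p assume "p \<in> ideal_gen R G"
  then obtain A r where A: "finite A" "A \<subseteq> G" "\<forall>g\<in>A. r g \<in> R" and p: "p = (\<Sum>g\<in>A. r g * g)"
    unfolding ideal_gen_def by blast
  have "(\<Sum>g\<in>A. r g * g) \<in> S" using A
  proof (induction A rule: finite_induct)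
    case empty then show ?case using assms(1) by simp
  next
    case (insert x F) then show ?case using assms(2,3) by simp
  qed
  then show "p \<in> S" using p by simp
qed

lemma gen_single:
  assumes "r \<in> R" "g \<in> G"
  shows "r * g \<in> ideal_gen R G"
  unfolding ideal_gen_def using assms
  by (intro CollectI exI[of _ "{g}"] exI[of _ "\<lambda>_. r"]) auto

lemma gen_zero: "0 \<in> ideal_gen R G"
  unfolding ideal_gen_def by (intro CollectI exI[of _ "{}"]) auto

lemma gen_add:
  assumes R0: "0 \<in> R" and Radd: "\<And>a b. a \<in> R \<Longrightarrow> b \<in> R \<Longrightarrow> a + b \<in> R"
    and p: "p \<in> ideal_gen R G" and q: "q \<in> ideal_gen R G"
  shows "p + q \<in> ideal_gen R G"
proof -
  obtain A r where A: "finite A" "A \<subseteq> G" "\<forall>g\<in>A. r g \<in> R" and pe: "p = (\<Sum>g\<in>A. r g * g)"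
    using p unfolding ideal_gen_def by blast
  obtain B s where B: "finite B" "B \<subseteq> G" "\<forall>g\<in>B. s g \<in> R" and qe: "q = (\<Sum>g\<in>B. s g * g)"
    using q unfolding ideal_gen_def by blast
  define t where "t g = (if g \<in> A then r g else 0) + (if g \<in> B then s g else 0)" for g
  have "(\<Sum>g\<in>A \<union> B. t g * g) = (\<Sum>g\<in>A \<union> B. (if g \<in> A then r g * g else 0)) + (\<Sum>g\<in>A \<union> B. (if g \<in> B then s g * g else 0))"
    unfolding sum.distrib[symmetric]
  proof (intro sum.cong refl)
    fix g show "t g * g = (if g \<in> A then r g * g else 0) + (if g \<in> B then s g * g else 0)"
      unfolding t_def by (cases "g \<in> A"; cases "g \<in> B") (simp_all add: distrib_right)
  qed
  also have "\<dots> = p + q"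
    using A(1) B(1) unfolding pe qe
    by (simp add: sum.If_cases Int_absorb1 Int_absorb2)
  finally have e: "p + q = (\<Sum>g\<in>A \<union> B. t g * g)" by simp
  have "\<forall>g\<in>A \<union> B. t g \<in> R" using A B R0 Radd unfolding t_def by auto
  then show ?thesis unfolding ideal_gen_def using A B e
    by (intro CollectI exI[of _ "A \<union> B"] exI[of _ t]) auto
qed

lemma gen_sum:
  assumes R0: "0 \<in> R" and Radd: "\<And>a b. a \<in> R \<Longrightarrow> b \<in> R \<Longrightarrow> a + b \<in> R"
  and "finite X" "\<And>x. x \<in> X \<Longrightarrow> f x \<in> ideal_gen R G"
  shows "sum f X \<in> ideal_gen R G"
  using assms(3,4)
  by (induction X rule: finite_induct) (auto intro: gen_add[OF R0 Radd] gen_zero)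

lemma polys_zero: "0 \<in> polys V" unfolding polys_def by simp
lemma polys_one: "1 \<in> polys V" unfolding polys_def by simp
lemma polys_add: "p \<in> polys V \<Longrightarrow> q \<in> polys V \<Longrightarrow> p + q \<in> polys V"
  using keys_add[of p q] unfolding polys_def by blast
lemma polys_mult: assumes "p \<in> polys V" "(q::'k::comm_semiring_1 mpol) \<in> polys V" shows "p * q \<in> polys V"
  unfolding polys_def
proof (intro CollectI ballI)
  fix m 
  have p: "\<forall>m\<in>Poly_Mapping.keys p. Poly_Mapping.keys m \<subseteq> V"
    and q: "\<forall>m\<in>Poly_Mapping.keys q. Poly_Mapping.keys m \<subseteq> V" using assms unfolding polys_def by auto
  assume m: "m \<in> Poly_Mapping.keys (p * q)"
  then obtain a b where "m = a + b" "a \<in> Poly_Mapping.keys p" "b \<in> Poly_Mapping.keys q"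
    using keys_mult[of p q] by blast
  then show "Poly_Mapping.keys m \<subseteq> V" using p q by (simp add: keys_add_nat)
qed
lemma polys_single: "Poly_Mapping.keys u \<subseteq> V \<Longrightarrow> Poly_Mapping.single u c \<in> polys V"
  unfolding polys_def by simp
lemma polys_Var: "i \<in> V \<Longrightarrow> (Var i :: 'k::comm_semiring_1 mpol) \<in> polys V"
  unfolding Var_def by (rule polys_single) simp
lemma polys_prod: "finite A \<Longrightarrow> (\<And>a. a \<in> A \<Longrightarrow> f a \<in> polys V) \<Longrightarrow> (\<Prod>a\<in>A. f a :: 'k::comm_semiring_1 mpol) \<in> polys V"
  by (induction A rule: finite_induct) (auto intro: polys_one polys_mult)
lemma polys_power: "(p :: 'k::comm_semiring_1 mpol) \<in> polys V \<Longrightarrow> p ^ k \<in> polys V"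
  by (induction k) (auto intro: polys_one polys_mult)
lemma polys_prod_list: "set xs \<subseteq> polys V \<Longrightarrow> prod_list (xs :: 'k::comm_semiring_1 mpol list) \<in> polys V"
  by (induction xs) (auto intro: polys_one polys_mult)

lemma single_prod: "finite A \<Longrightarrow> (\<Prod>a\<in>A. Poly_Mapping.single (g a) (1::'k::comm_semiring_1)) = Poly_Mapping.single (\<Sum>a\<in>A. g a) 1"
  by (induction A rule: finite_induct) (auto simp: mult_single add.commute)

definition ind :: "nat set \<Rightarrow> nat \<Rightarrow>\<^sub>0 nat" where "ind A = (\<Sum>i\<in>A. Poly_Mapping.single i 1)"

lemma lookup_ind: "finite A \<Longrightarrow> Poly_Mapping.lookup (ind A) x = (if x \<in> A then 1 else 0)"
  unfolding ind_def by (simp add: lookup_sum lookup_single when_def)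
lemma keys_ind: "finite A \<Longrightarrow> Poly_Mapping.keys (ind A) = A"
  by (auto simp: in_keys_iff lookup_ind split: if_splits)

lemma sqfree_single: "finite A \<Longrightarrow> (sqfree_monomial A :: 'k::comm_semiring_1 mpol) = Poly_Mapping.single (ind A) 1"
  unfolding sqfree_monomial_def Var_def ind_def by (simp add: single_prod)

lemma poly_sum_terms: "p = (\<Sum>u\<in>Poly_Mapping.keys p. Poly_Mapping.single u (Poly_Mapping.lookup p u))"
proof (rule poly_mapping_eqI)
  fix x
  have "(\<Sum>u\<in>Poly_Mapping.keys p. Poly_Mapping.lookup (Poly_Mapping.single u (Poly_Mapping.lookup p u)) x)
     = (\<Sum>u\<in>Poly_Mapping.keys p. if u = x then Poly_Mapping.lookup p u else 0)"
    by (intro sum.cong refl) (simp add: lookup_single when_def)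
  also have "\<dots> = Poly_Mapping.lookup p x"
    by (simp add: sum.delta in_keys_iff)
  finally show "Poly_Mapping.lookup p x = Poly_Mapping.lookup (\<Sum>u\<in>Poly_Mapping.keys p. Poly_Mapping.single u (Poly_Mapping.lookup p u)) x"
    by (simp add: lookup_sum)
qed

definition Wt :: "((nat \<Rightarrow>\<^sub>0 nat) \<Rightarrow> nat) \<Rightarrow> nat \<Rightarrow> 'k::zero mpol set" where
  "Wt w k = {p. \<forall>u\<in>Poly_Mapping.keys p. k \<le> w u}"
definition Ex :: "((nat \<Rightarrow>\<^sub>0 nat) \<Rightarrow> nat) \<Rightarrow> nat \<Rightarrow> 'k::zero mpol set" where
  "Ex w k = {p. \<forall>u\<in>Poly_Mapping.keys p. w u = k}"

definition additive :: "((nat \<Rightarrow>\<^sub>0 nat) \<Rightarrow> nat) \<Rightarrow> bool" where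
  "additive w \<longleftrightarrow> (\<forall>a b. w (a + b) = w a + w b)"

lemma Wt_add: "p \<in> Wt w k \<Longrightarrow> q \<in> Wt w k \<Longrightarrow> p + q \<in> Wt w k"
  using keys_add[of p q] unfolding Wt_def by blast
lemma Wt_uminus: "(p::'k::ab_group_add mpol) \<in> Wt w k \<Longrightarrow> - p \<in> Wt w k"
  unfolding Wt_def by simp
lemma Wt_0: "p \<in> Wt w 0" unfolding Wt_def by simp
lemma Wt_zero: "0 \<in> Wt w k" unfolding Wt_def by simp
lemma Wt_mono: "a \<le> b \<Longrightarrow> p \<in> Wt w b \<Longrightarrow> p \<in> Wt w a" unfolding Wt_def by force
lemma Wt_mult:
  assumes "additive w" "p \<in> Wt w a" "(q::'k::comm_semiring_1 mpol) \<in> Wt w b"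
  shows "p * q \<in> Wt w (a + b)"
  unfolding Wt_def
proof (intro CollectI ballI)
  fix m assume "m \<in> Poly_Mapping.keys (p * q)"
  then obtain x y where "m = x + y" "x \<in> Poly_Mapping.keys p" "y \<in> Poly_Mapping.keys q"
    using keys_mult[of p q] by blast
  then show "a + b \<le> w m" using assms unfolding Wt_def additive_def by force
qed
lemma Ex_mult:
  assumes "additive w" "p \<in> Ex w a" "(q::'k::comm_semiring_1 mpol) \<in> Ex w b"
  shows "p * q \<in> Ex w (a + b)"
  unfolding Ex_def
proof (intro CollectI ballI)
  fix m assume "m \<in> Poly_Mapping.keys (p * q)"
  then obtain x y where "m = x + y" "x \<in> Poly_Mapping.keys p" "y \<in> Poly_Mapping.keys q"
    using keys_mult[of p q] by blast
  then show "w m = a + b" using assms unfolding Ex_def additive_def by force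
qed

lemma split_poly:
  fixes p :: "'k::comm_ring_1 mpol"
  shows "\<exists>p0 p1. p = p0 + p1 \<and> Poly_Mapping.keys p0 = {u\<in>Poly_Mapping.keys p. Q u}
     \<and> Poly_Mapping.keys p1 = {u\<in>Poly_Mapping.keys p. \<not> Q u}"
proof -
  define g where "g u = (if Q u then Poly_Mapping.lookup p u else 0)" for u
  have fin: "finite {u. g u \<noteq> 0}"
    by (rule finite_subset[of _ "Poly_Mapping.keys p"]) (auto simp: g_def in_keys_iff split: if_splits)
  define p0 where "p0 = Abs_poly_mapping g"
  have l0: "Poly_Mapping.lookup p0 = g" unfolding p0_def using fin by simp
  define p1 where "p1 = p - p0"
  have l1: "Poly_Mapping.lookup p1 u = (if Q u then 0 else Poly_Mapping.lookup p u)" for u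
    unfolding p1_def by (simp add: lookup_minus l0 g_def)
  have "p = p0 + p1" unfolding p1_def by simp
  moreover have "Poly_Mapping.keys p0 = {u\<in>Poly_Mapping.keys p. Q u}"
    by (auto simp: in_keys_iff l0 g_def split: if_splits)
  moreover have "Poly_Mapping.keys p1 = {u\<in>Poly_Mapping.keys p. \<not> Q u}"
    by (auto simp: in_keys_iff l1 split: if_splits)
  ultimately show ?thesis by blast
qed

lemma graded:
  fixes s f :: "'k::field mpol"
  assumes add: "additive w" and s: "s \<notin> Wt w 1" and sf: "s * f \<in> Wt w m"
  shows "f \<in> Wt w m"
proof (rule ccontr)
  assume "f \<notin> Wt w m"
  then obtain u0 where u0: "u0 \<in> Poly_Mapping.keys f" "w u0 < m" unfolding Wt_def by force
  define k where "k = Min (w ` Poly_Mapping.keys f)"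
  have fin: "finite (w ` Poly_Mapping.keys f)" by simp
  have kle: "k \<le> w u" if "u \<in> Poly_Mapping.keys f" for u
    unfolding k_def using fin that by simp
  have "k \<in> w ` Poly_Mapping.keys f" unfolding k_def using fin u0(1) by (intro Min_in) auto
  then obtain u1 where u1: "u1 \<in> Poly_Mapping.keys f" "w u1 = k" by auto
  have km: "k < m" using kle[OF u0(1)] u0(2) by simp
  obtain f0 f1 where f: "f = f0 + f1" and kf0: "Poly_Mapping.keys f0 = {u\<in>Poly_Mapping.keys f. w u = k}"
    and kf1: "Poly_Mapping.keys f1 = {u\<in>Poly_Mapping.keys f. w u \<noteq> k}"
    using split_poly[of f "\<lambda>u. w u = k"] by blast
  have "\<forall>u\<in>Poly_Mapping.keys f1. k + 1 \<le> w u" unfolding kf1 using kle by force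
  then have f1W: "f1 \<in> Wt w (k + 1)" unfolding Wt_def by simp
  have "\<forall>u\<in>Poly_Mapping.keys f0. w u = k" unfolding kf0 by simp
  then have f0E: "f0 \<in> Ex w k" unfolding Ex_def by simp
  have f0nz: "f0 \<noteq> 0" using u1 kf0 by (metis (mono_tags, lifting) empty_iff keys_zero mem_Collect_eq)
  obtain v0 where v0: "v0 \<in> Poly_Mapping.keys s" "w v0 = 0" using s unfolding Wt_def by force
  obtain s0 s1 where sd: "s = s0 + s1" and ks0: "Poly_Mapping.keys s0 = {u\<in>Poly_Mapping.keys s. w u = 0}"
    and ks1: "Poly_Mapping.keys s1 = {u\<in>Poly_Mapping.keys s. w u \<noteq> 0}"
    using split_poly[of s "\<lambda>u. w u = 0"] by blast
  have "\<forall>u\<in>Poly_Mapping.keys s1. 1 \<le> w u" unfolding ks1 by force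
  then have s1W: "s1 \<in> Wt w 1" unfolding Wt_def by simp
  have "\<forall>u\<in>Poly_Mapping.keys s0. w u = 0" unfolding ks0 by simp
  then have s0E: "s0 \<in> Ex w 0" unfolding Ex_def by simp
  have s0nz: "s0 \<noteq> 0" using v0 ks0 by (metis (mono_tags, lifting) empty_iff keys_zero mem_Collect_eq)
  define rest where "rest = s0 * f1 + s1 * f0 + s1 * f1"
  have e: "s * f = s0 * f0 + rest" unfolding rest_def sd f by (simp add: algebra_simps)
  have r1: "s0 * f1 \<in> Wt w (k + 1)" using Wt_mult[OF add Wt_0 f1W, of s0] by simp
  have r2: "s1 * f0 \<in> Wt w (k + 1)" using Wt_mult[OF add s1W Wt_0, of f0] Wt_mult[OF add s1W, of f0 k] f0E
    unfolding Ex_def Wt_def by (simp add: add.commute)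
  have r3: "s1 * f1 \<in> Wt w (k + 1)" using Wt_mult[OF add s1W f1W] by (rule Wt_mono[rotated]) simp
  have rW: "rest \<in> Wt w (k + 1)" unfolding rest_def using r1 r2 r3 Wt_add by blast
  have pE: "s0 * f0 \<in> Ex w k" using Ex_mult[OF add s0E f0E] by simp
  have pnz: "s0 * f0 \<noteq> 0" using s0nz f0nz by simp
  then obtain u where u: "u \<in> Poly_Mapping.keys (s0 * f0)" by (metis keys_eq_empty all_not_in_conv)
  have wu: "w u = k" using pE u unfolding Ex_def by blast
  have "u \<notin> Poly_Mapping.keys rest" using rW wu unfolding Wt_def by force
  then have "u \<in> Poly_Mapping.keys (s * f)" using u unfolding e by (simp add: in_keys_iff lookup_add)
  then show False using sf wu km unfolding Wt_def by force
qed

lemma edge_form: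
  assumes "e \<in> ngon_edges n" "n \<ge> 3"
  shows "\<exists>i i'. e = {i, i'} \<and> i \<in> {1..n} \<and> i' \<in> {1..n} \<and> i \<noteq> i'"
proof -
  from assms(1) consider (a) i where "e = {i, i + 1}" "1 \<le> i" "i \<le> n - 1" | (b) "e = {n, 1}"
    unfolding ngon_edges_def by blast
  then show ?thesis
  proof cases
    case (a i) then show ?thesis using assms(2) by (intro exI[of _ i] exI[of _ "i+1"]) auto
  next
    case b then show ?thesis using assms(2) by (intro exI[of _ n] exI[of _ 1]) auto
  qed
qed

lemma facet_form:
  assumes "F \<in> bipyramid_facets n" "n \<ge> 3"
  shows "\<exists>a i i'. F = insert a {i, i'} \<and> (a = 0 \<or> a = n + 1) \<and> i \<in> {1..n} \<and> i' \<in> {1..n} \<and> i \<noteq> i'"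
proof -
  obtain a e where "F = insert a e" "a = 0 \<or> a = n + 1" "e \<in> ngon_edges n"
    using assms(1) unfolding bipyramid_facets_def by blast
  then show ?thesis using edge_form[OF _ assms(2), of e] by blast
qed

lemma facet_card:
  assumes "F \<in> bipyramid_facets n" "n \<ge> 3"
  shows "finite F \<and> card F = 3"
proof -
  obtain a i i' where "F = insert a {i, i'}" "a = 0 \<or> a = n + 1" "i \<in> {1..n}" "i' \<in> {1..n}" "i \<noteq> i'"
    using facet_form[OF assms] by blast
  then show ?thesis by auto
qed

lemma facet_sub_V:
  assumes "F \<in> bipyramid_facets n" "n \<ge> 3"
  shows "F \<subseteq> {0..n+1}"
  using facet_form[OF assms] by auto

lemma face_sub_V:
  assumes "F \<in> bipyramid n" "n \<ge> 3"
  shows "F \<subseteq> {0..n+1}"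
  using assms facet_sub_V unfolding bipyramid_def by blast

lemma facet_face: "F \<in> bipyramid_facets n \<Longrightarrow> F \<in> bipyramid n"
  unfolding bipyramid_def by blast

lemma face_down: "F \<in> bipyramid n \<Longrightarrow> G \<subseteq> F \<Longrightarrow> G \<in> bipyramid n"
  unfolding bipyramid_def by blast

lemma facet_max:
  assumes "F \<in> bipyramid_facets n" "G \<in> bipyramid_facets n" "F \<subseteq> G" "n \<ge> 3"
  shows "F = G"
  using facet_card[OF assms(1,4)] facet_card[OF assms(2,4)] assms(3)
  by (metis card_subset_eq)

lemma three_nonface:
  assumes "i \<in> {1..n}" "i' \<in> {1..n}" "j \<in> {1..n}" "i \<noteq> i'" "j \<noteq> i" "j \<noteq> i'" "n \<ge> 3"
  shows "{i, i', j} \<notin> bipyramid n"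
proof
  assume "{i, i', j} \<in> bipyramid n"
  then obtain F where F: "F \<in> bipyramid_facets n" "{i, i', j} \<subseteq> F" unfolding bipyramid_def by blast
  obtain a b c where F2: "F = insert a {b, c}" "a = 0 \<or> a = n + 1"
    using facet_form[OF F(1) assms(7)] by blast
  have "{i, i', j} \<subseteq> {b, c}" using F F2 assms(1-3) by auto
  then have "card {i, i', j} \<le> card {b, c}" by (intro card_mono) auto
  also have "\<dots> \<le> 2" by (simp add: card_insert_le_m1)
  finally show False using assms(4-6) by simp
qed

definition nx :: "nat \<Rightarrow> nat \<Rightarrow> nat" where "nx n i = (if i = n then 1 else i + 1)"

lemma nx_facets:
  assumes "i \<in> {1..n}" "n \<ge> 3"
  shows "{0, i, nx n i} \<in> bipyramid_facets n" "{n + 1, i, nx n i} \<in> bipyramid_facets n"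
proof -
  have "{i, nx n i} \<in> ngon_edges n"
  proof (cases "i = n")
    case True then show ?thesis unfolding ngon_edges_def nx_def by auto
  next
    case False then show ?thesis using assms unfolding ngon_edges_def nx_def by auto
  qed
  then show "{0, i, nx n i} \<in> bipyramid_facets n" "{n + 1, i, nx n i} \<in> bipyramid_facets n"
    unfolding bipyramid_facets_def by blast+
qed

lemma nx_range: "i \<in> {1..n} \<Longrightarrow> n \<ge> 3 \<Longrightarrow> nx n i \<in> {1..n} \<and> nx n i \<noteq> i"
  unfolding nx_def by auto

lemma nx_bij: "n \<ge> 3 \<Longrightarrow> bij_betw (nx n) {1..n} {1..n}"
proof (rule bij_betw_imageI)
  assume n: "n \<ge> 3"
  show "inj_on (nx n) {1..n}" unfolding inj_on_def nx_def by auto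
  show "nx n ` {1..n} = {1..n}"
  proof
    show "nx n ` {1..n} \<subseteq> {1..n}" using nx_range n by auto
    show "{1..n} \<subseteq> nx n ` {1..n}"
    proof
      fix j assume j: "j \<in> {1..n}"
      show "j \<in> nx n ` {1..n}"
      proof (cases "j = 1")
        case True then have "nx n n = j" unfolding nx_def by simp
        then show ?thesis using n by force
      next
        case False then have "nx n (j - 1) = j" using j n unfolding nx_def by auto
        then show ?thesis using j False by (intro image_eqI[of _ _ "j - 1"]) auto
      qed
    qed
  qed
qed

definition wF :: "nat \<Rightarrow> nat set \<Rightarrow> (nat \<Rightarrow>\<^sub>0 nat) \<Rightarrow> nat" where
  "wF n F u = (\<Sum>j\<in>{0..n+1} - F. Poly_Mapping.lookup u j)"

definition NN :: "nat \<Rightarrow> 'k::comm_ring_1 mpol set" where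
  "NN n = {p \<in> polys {0..n+1}. \<forall>u\<in>Poly_Mapping.keys p. Poly_Mapping.keys u \<notin> bipyramid n}"

lemma additive_wF: "additive (wF n F)"
  unfolding additive_def wF_def by (simp add: lookup_add sum.distrib)

lemma wF_zero_sub:
  assumes "Poly_Mapping.keys u \<subseteq> {0..n+1}" "wF n F u = 0"
  shows "Poly_Mapping.keys u \<subseteq> F"
proof
  fix j assume j: "j \<in> Poly_Mapping.keys u"
  show "j \<in> F"
  proof (rule ccontr)
    assume "j \<notin> F"
    then have "j \<in> {0..n+1} - F" using j assms(1) by auto
    then have "Poly_Mapping.lookup u j = 0" using assms(2) unfolding wF_def by simp
    then show False using j by (simp add: in_keys_iff)
  qed
qed

lemma wF_sub_zero:
  assumes "Poly_Mapping.keys u \<subseteq> F"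
  shows "wF n F u = 0"
  unfolding wF_def using assms by (intro sum.neutral) (auto simp: in_keys_iff)

lemma sq_in_polys: "\<tau> \<subseteq> V \<Longrightarrow> finite \<tau> \<Longrightarrow> (sqfree_monomial \<tau> :: 'k::comm_semiring_1 mpol) \<in> polys V"
  by (simp add: sqfree_single polys_single keys_ind)

lemma N_mult:
  assumes r: "r \<in> polys {0..n+1}" and p: "(p::'k::comm_ring_1 mpol) \<in> NN n"
  shows "r * p \<in> NN n"
proof -
  have pR: "p \<in> polys {0..n+1}" using p unfolding NN_def by simp
  have "\<forall>m\<in>Poly_Mapping.keys (r * p). Poly_Mapping.keys m \<notin> bipyramid n"
  proof
    fix m assume "m \<in> Poly_Mapping.keys (r * p)"
    then obtain a b where ab: "m = a + b" "a \<in> Poly_Mapping.keys r" "b \<in> Poly_Mapping.keys p"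
      using keys_mult[of r p] by blast
    have "Poly_Mapping.keys b \<notin> bipyramid n" using p ab(3) unfolding NN_def by blast
    moreover have "Poly_Mapping.keys b \<subseteq> Poly_Mapping.keys m" using ab(1) by (simp add: keys_add_nat)
    ultimately show "Poly_Mapping.keys m \<notin> bipyramid n" using face_down by blast
  qed
  then show ?thesis unfolding NN_def using polys_mult[OF r pR] by simp
qed

lemma I_sub_N:
  "(stanley_reisner {0..n+1} (bipyramid n) :: 'k::comm_ring_1 mpol set) \<subseteq> NN n"
  unfolding stanley_reisner_def
proof (rule gen_sub)
  show "0 \<in> NN n" unfolding NN_def by (simp add: polys_zero)
  show "a + b \<in> NN n" if "a \<in> NN n" "b \<in> NN n" for a b :: "'k mpol"
    using that keys_add[of a b] polys_add[of a "{0..n+1}" b] unfolding NN_def by blast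
  show "r * g \<in> NN n" if rr: "r \<in> polys {0..n+1}" and gg: "g \<in> {sqfree_monomial \<tau> |\<tau>. \<tau> \<subseteq> {0..n + 1} \<and> \<tau> \<notin> bipyramid n}" for r g :: "'k mpol"
  proof -
    obtain \<tau> where t: "g = sqfree_monomial \<tau>" "\<tau> \<subseteq> {0..n+1}" "\<tau> \<notin> bipyramid n" using gg by blast
    have fin: "finite \<tau>" using t(2) finite_subset by blast
    have "g \<in> NN n" unfolding NN_def using t fin by (simp add: sqfree_single keys_ind polys_single)
    then show ?thesis using N_mult[OF rr] by blast
  qed
qed

lemma N_sub_I:
  "NN n \<subseteq> (stanley_reisner {0..n+1} (bipyramid n) :: 'k::comm_ring_1 mpol set)"
proof
  fix p :: "'k mpol" assume p: "p \<in> NN n"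
  have tm: "Poly_Mapping.single u (Poly_Mapping.lookup p u) \<in> stanley_reisner {0..n+1} (bipyramid n)"
    if u: "u \<in> Poly_Mapping.keys p" for u
  proof -
    have kV: "Poly_Mapping.keys u \<subseteq> {0..n+1}" using p u unfolding NN_def polys_def by blast
    have nf: "Poly_Mapping.keys u \<notin> bipyramid n" using p u unfolding NN_def by blast
    define d where "d = u - ind (Poly_Mapping.keys u)"
    have ud: "u = d + ind (Poly_Mapping.keys u)"
      by (rule poly_mapping_eqI) (auto simp: d_def lookup_add lookup_minus lookup_ind in_keys_iff)
    have dk: "Poly_Mapping.keys d \<subseteq> Poly_Mapping.keys u"
      by (auto simp: d_def in_keys_iff lookup_minus)
    have e: "Poly_Mapping.single u (Poly_Mapping.lookup p u) = Poly_Mapping.single d (Poly_Mapping.lookup p u) * (sqfree_monomial (Poly_Mapping.keys u) :: 'k mpol)"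
      by (subst ud) (simp add: sqfree_single mult_single)
    show ?thesis unfolding e stanley_reisner_def
      by (rule gen_single) (use kV nf dk in \<open>auto intro: polys_single\<close>)
  qed
  have "(\<Sum>u\<in>Poly_Mapping.keys p. Poly_Mapping.single u (Poly_Mapping.lookup p u)) \<in> stanley_reisner {0..n+1} (bipyramid n)"
    unfolding stanley_reisner_def
    by (rule gen_sum) (use tm polys_zero polys_add in \<open>auto simp: stanley_reisner_def\<close>)
  then show "p \<in> stanley_reisner {0..n+1} (bipyramid n)" using poly_sum_terms[of p] by simp
qed

lemma I_eq_N: "(stanley_reisner {0..n+1} (bipyramid n) :: 'k::comm_ring_1 mpol set) = NN n"
  using I_sub_N N_sub_I by blast

lemma N_Wt:
  assumes "F \<in> bipyramid n"
  shows "(NN n :: 'k::comm_ring_1 mpol set) \<subseteq> Wt (wF n F) 1"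
proof
  fix p :: "'k mpol" assume p: "p \<in> NN n"
  show "p \<in> Wt (wF n F) 1" unfolding Wt_def
  proof (intro CollectI ballI)
    fix u assume u: "u \<in> Poly_Mapping.keys p"
    have kV: "Poly_Mapping.keys u \<subseteq> {0..n+1}" using p u unfolding NN_def polys_def by blast
    have nf: "Poly_Mapping.keys u \<notin> bipyramid n" using p u unfolding NN_def by blast
    show "1 \<le> wF n F u"
    proof (rule ccontr)
      assume "\<not> 1 \<le> wF n F u"
      then have "Poly_Mapping.keys u \<subseteq> F" using wF_zero_sub[OF kV] by simp
      then show False using nf face_down[OF assms] by blast
    qed
  qed
qed

definition PF :: "nat \<Rightarrow> nat set \<Rightarrow> 'k::comm_ring_1 mpol set" where
  "PF n F = {p \<in> polys {0..n+1}. p \<in> Wt (wF n F) 1}"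

lemma one_not_Wt1: "(1::'k::comm_ring_1 mpol) \<notin> Wt (wF n F) 1"
proof -
  have "wF n F 0 = 0" by (rule wF_sub_zero) simp
  then show ?thesis unfolding Wt_def by simp
qed

lemma PF_prime: "prime_ideal (polys {0..n+1}) (PF n F :: 'k::field mpol set)"
  unfolding prime_ideal_def is_ideal_def
proof (intro conjI ballI impI)
  show "PF n F \<subseteq> polys {0..n+1}" unfolding PF_def by blast
  show "(0::'k mpol) \<in> PF n F" unfolding PF_def by (simp add: polys_zero Wt_zero)
  show "a + b \<in> PF n F" if "a \<in> PF n F" "b \<in> PF n F" for a b :: "'k mpol"
    using that unfolding PF_def by (auto intro: polys_add Wt_add)
  show "r * a \<in> PF n F" if "r \<in> polys {0..n+1}" "a \<in> PF n F" for r a :: "'k mpol"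
    using that Wt_mult[OF additive_wF Wt_0, of a n F 1 r] unfolding PF_def by (auto intro: polys_mult)
  show "PF n F \<noteq> (polys {0..n+1} :: 'k mpol set)"
    using one_not_Wt1[of n F] polys_one[of "{0..n+1}"] unfolding PF_def by blast
  show "a \<in> PF n F \<or> b \<in> PF n F" if "a \<in> polys {0..n+1}" "b \<in> polys {0..n+1}" "a * b \<in> PF n F" for a b :: "'k mpol"
    using that graded[OF additive_wF, of a n F b 1] unfolding PF_def by auto
qed

lemma PF_Ass:
  assumes F: "F \<in> bipyramid_facets n" and n: "n \<ge> 3"
  shows "(PF n F :: 'k::field mpol set) \<in> Ass (polys {0..n+1}) (stanley_reisner {0..n+1} (bipyramid n))"
proof -
  have FV: "F \<subseteq> {0..n+1}" using facet_sub_V[OF F n] .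
  have finF: "finite F" using facet_card[OF F n] by simp
  define g where "g = (sqfree_monomial F :: 'k mpol)"
  have gs: "g = Poly_Mapping.single (ind F) 1" unfolding g_def by (simp add: sqfree_single finF)
  have gR: "g \<in> polys {0..n+1}" unfolding g_def using sq_in_polys[OF FV finF] .
  have gW: "g \<notin> Wt (wF n F) 1"
  proof -
    have "wF n F (ind F) = 0" by (rule wF_sub_zero) (simp add: keys_ind finF)
    then show ?thesis unfolding Wt_def gs by simp
  qed
  have "PF n F = {r \<in> polys {0..n+1}. r * g \<in> stanley_reisner {0..n+1} (bipyramid n)}"
  proof (intro set_eqI iffI)
    fix r :: "'k mpol" assume r: "r \<in> PF n F"
    have rR: "r \<in> polys {0..n+1}" and rW: "r \<in> Wt (wF n F) 1" using r unfolding PF_def by auto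
    have "\<forall>m\<in>Poly_Mapping.keys (r * g). Poly_Mapping.keys m \<notin> bipyramid n"
    proof
      fix m assume "m \<in> Poly_Mapping.keys (r * g)"
      then obtain a b where ab: "m = a + b" "a \<in> Poly_Mapping.keys r" "b \<in> Poly_Mapping.keys g"
        using keys_mult[of r g] by blast
      have b: "b = ind F" using ab(3) unfolding gs by simp
      have km: "Poly_Mapping.keys m = Poly_Mapping.keys a \<union> F" using ab(1) b by (simp add: keys_add_nat keys_ind finF)
      have aV: "Poly_Mapping.keys a \<subseteq> {0..n+1}" using rR ab(2) unfolding polys_def by blast
      have "1 \<le> wF n F a" using rW ab(2) unfolding Wt_def by blast
      then have naF: "\<not> Poly_Mapping.keys a \<subseteq> F" using wF_sub_zero by fastforce
      show "Poly_Mapping.keys m \<notin> bipyramid n"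
      proof
        assume "Poly_Mapping.keys m \<in> bipyramid n"
        then obtain G where G: "G \<in> bipyramid_facets n" "Poly_Mapping.keys m \<subseteq> G" unfolding bipyramid_def by blast
        then have "F \<subseteq> G" using km by blast
        then have "F = G" using facet_max[OF F G(1) _ n] by blast
        then show False using G(2) km naF by blast
      qed
    qed
    then have "r * g \<in> NN n" unfolding NN_def using polys_mult[OF rR gR] by blast
    then show "r \<in> {r \<in> polys {0..n+1}. r * g \<in> stanley_reisner {0..n+1} (bipyramid n)}"
      using rR I_eq_N by blast
  next
    fix r :: "'k mpol" assume r: "r \<in> {r \<in> polys {0..n+1}. r * g \<in> stanley_reisner {0..n+1} (bipyramid n)}"
    then have rR: "r \<in> polys {0..n+1}" and "r * g \<in> NN n" using I_eq_N by auto
    then have "g * r \<in> Wt (wF n F) 1" using N_Wt[OF facet_face[OF F]] by (auto simp: mult.commute)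
    then have "r \<in> Wt (wF n F) 1" using graded[OF additive_wF gW] by blast
    then show "r \<in> PF n F" using rR unfolding PF_def by blast
  qed
  then show ?thesis unfolding Ass_def using PF_prime gR by blast
qed

lemma Ass_sub:
  assumes P: "P \<in> Ass (polys {0..n+1}) (stanley_reisner {0..n+1} (bipyramid n) :: 'k::field mpol set)"
    and n: "n \<ge> 3"
  shows "\<exists>G\<in>bipyramid_facets n. P \<subseteq> PF n G"
proof -
  obtain g where gR: "g \<in> polys {0..n+1}" and Pe: "P = {r \<in> polys {0..n+1}. r * g \<in> NN n}"
    and Pne: "P \<noteq> polys {0..n+1}"
    using P I_eq_N unfolding Ass_def prime_ideal_def by blast
  have "g \<notin> NN n"
  proof
    assume "g \<in> NN n"
    then have "\<forall>r\<in>polys {0..n+1}. r * g \<in> NN n" using N_mult by blast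
    then show False using Pe Pne by blast
  qed
  then obtain u where u: "u \<in> Poly_Mapping.keys g" "Poly_Mapping.keys u \<in> bipyramid n"
    using gR unfolding NN_def by blast
  then obtain G where G: "G \<in> bipyramid_facets n" "Poly_Mapping.keys u \<subseteq> G" unfolding bipyramid_def by blast
  have gW: "g \<notin> Wt (wF n G) 1" using wF_sub_zero[OF G(2)] u(1) unfolding Wt_def by fastforce
  have "P \<subseteq> PF n G"
  proof
    fix r assume "r \<in> P"
    then have rR: "r \<in> polys {0..n+1}" and "r * g \<in> NN n" using Pe by auto
    then have "g * r \<in> Wt (wF n G) 1" using N_Wt[OF facet_face[OF G(1)]] by (auto simp: mult.commute)
    then have "r \<in> Wt (wF n G) 1" using graded[OF additive_wF gW] by blast
    then show "r \<in> PF n G" using rR unfolding PF_def by blast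
  qed
  then show ?thesis using G(1) by blast
qed

lemma prod_list_Wt:
  assumes "set xs \<subseteq> Wt (wF n F) 1"
  shows "prod_list (xs :: 'k::comm_ring_1 mpol list) \<in> Wt (wF n F) (length xs)"
  using assms
proof (induction xs)
  case Nil then show ?case by (simp add: Wt_0)
  next
  case (Cons x xs)
  then have "x * prod_list xs \<in> Wt (wF n F) (1 + length xs)"
    by (intro Wt_mult[OF additive_wF]) auto
  then show ?case by simp
qed

lemma pow_Wt:
  assumes "F \<in> bipyramid n"
  shows "ideal_pow (polys {0..n+1}) (stanley_reisner {0..n+1} (bipyramid n) :: 'k::comm_ring_1 mpol set) m
     \<subseteq> Wt (wF n F) m"
  unfolding ideal_pow_def
proof (rule gen_sub)
  show "0 \<in> Wt (wF n F) m" by (rule Wt_zero)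
  show "a + b \<in> Wt (wF n F) m" if "a \<in> Wt (wF n F) m" "b \<in> Wt (wF n F) m" for a b :: "'k mpol"
    using that by (rule Wt_add)
  show "r * g \<in> Wt (wF n F) m" if "r \<in> polys {0..n+1}"
    and gg: "g \<in> {prod_list xs |xs. length xs = m \<and> set xs \<subseteq> stanley_reisner {0..n+1} (bipyramid n)}" for r g :: "'k mpol"
  proof -
    obtain xs where xs: "g = prod_list xs" "length xs = m" "set xs \<subseteq> stanley_reisner {0..n+1} (bipyramid n)"
      using gg by blast
    have "set xs \<subseteq> Wt (wF n F) 1" using xs(3) I_eq_N N_Wt[OF assms] by blast
    then have "g \<in> Wt (wF n F) m" using prod_list_Wt xs by metis
    then show ?thesis using Wt_mult[OF additive_wF Wt_0, of g n F m r] by simp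
  qed
qed

lemma symb_Wt:
  assumes F: "F \<in> bipyramid_facets n" and n: "n \<ge> 3"
    and f: "f \<in> symbolic_power (polys {0..n+1}) (stanley_reisner {0..n+1} (bipyramid n) :: 'k::field mpol set) m"
  shows "f \<in> Wt (wF n F) m"
proof -
  obtain s where s: "s \<in> polys {0..n+1} - PF n F"
    and sf: "s * f \<in> ideal_pow (polys {0..n+1}) (stanley_reisner {0..n+1} (bipyramid n)) m"
    using f PF_Ass[OF F n] unfolding symbolic_power_def by blast
  have "s \<notin> Wt (wF n F) 1" using s unfolding PF_def by blast
  moreover have "s * f \<in> Wt (wF n F) m" using sf pow_Wt[OF facet_face[OF F]] by blast
  ultimately show ?thesis using graded[OF additive_wF] by blast
qed

lemma mon_deg_eq:
  assumes "finite S" "Poly_Mapping.keys v \<subseteq> S"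
  shows "mon_deg v = (\<Sum>i\<in>S. Poly_Mapping.lookup v i)"
  unfolding mon_deg_def using assms by (intro sum.mono_neutral_left) (auto simp: in_keys_iff)

lemma symb_sub_R: "symbolic_power R I m \<subseteq> R"
  unfolding symbolic_power_def by blast

lemma lower_bound:
  assumes n: "n \<ge> 4"
    and f: "f \<in> symbolic_power (polys {0..n+1}) (stanley_reisner {0..n+1} (bipyramid n) :: 'k::field mpol set) m"
    and fnz: "f \<noteq> 0" and hom: "homogeneous_of t f"
  shows "2 * n * m \<le> (2 * n - 4) * t"
proof -
  have n3: "n \<ge> 3" using n by simp
  have fR: "f \<in> polys {0..n+1}" using f symb_sub_R by blast
  obtain u where u: "u \<in> Poly_Mapping.keys f" using fnz by (metis keys_eq_empty all_not_in_conv)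
  have kV: "Poly_Mapping.keys u \<subseteq> {0..n+1}" using fR u unfolding polys_def by blast
  define L where "L j = Poly_Mapping.lookup u j" for j
  have tV: "t = (\<Sum>j\<in>{0..n+1}. L j)" using hom u mon_deg_eq[OF _ kV] unfolding homogeneous_of_def L_def by simp
  have facet_ineq: "m + (L a + L i + L (nx n i)) \<le> t" if i: "i \<in> {1..n}" and a: "a = 0 \<or> a = n + 1" for a i
  proof -
    have Fa: "{a, i, nx n i} \<in> bipyramid_facets n" using nx_facets[OF i n3] a by blast
    have "f \<in> Wt (wF n {a, i, nx n i}) m" using symb_Wt[OF Fa n3 f] .
    then have m1: "m \<le> wF n {a, i, nx n i} u" using u unfolding Wt_def by blast
    have sub: "{a, i, nx n i} \<subseteq> {0..n+1}" using facet_sub_V[OF Fa n3] .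
    have "t = (\<Sum>j\<in>{0..n+1} - {a, i, nx n i}. L j) + (\<Sum>j\<in>{a, i, nx n i}. L j)"
      unfolding tV by (rule sum.subset_diff[OF sub]) simp
    moreover have "wF n {a, i, nx n i} u = (\<Sum>j\<in>{0..n+1} - {a, i, nx n i}. L j)"
      unfolding wF_def L_def by simp
    ultimately have "t = wF n {a, i, nx n i} u + (\<Sum>j\<in>{a, i, nx n i}. L j)" by simp
    moreover have "(\<Sum>j\<in>{a, i, nx n i}. L j) = L a + L i + L (nx n i)"
      using nx_range[OF i n3] i a by auto
    ultimately show ?thesis using m1 by simp
  qed
  define S where "S = (\<Sum>j\<in>{1..n}. L j)"
  have Snx: "(\<Sum>j\<in>{1..n}. L (nx n j)) = S"
    unfolding S_def using sum.reindex_bij_betw[OF nx_bij[OF n3], of L] by simp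
  have tS: "t = L 0 + L (n + 1) + S"
  proof -
    have "{0..n+1} = insert 0 (insert (n+1) {1..n})" by auto
    then show ?thesis unfolding tV S_def by simp
  qed
  have A0: "(\<Sum>i\<in>{1..n}. m + (L 0 + L i + L (nx n i))) \<le> (\<Sum>i\<in>{1..n}. t)"
    by (rule sum_mono) (rule facet_ineq; simp)
  have A1: "(\<Sum>i\<in>{1..n}. m + (L (n+1) + L i + L (nx n i))) \<le> (\<Sum>i\<in>{1..n}. t)"
    by (rule sum_mono) (rule facet_ineq; simp)
  have B0: "n * m + n * L 0 + S + S \<le> n * t"
    using A0 Snx unfolding S_def by (simp add: sum.distrib)
  have B1: "n * m + n * L (n+1) + S + S \<le> n * t"
    using A1 Snx unfolding S_def by (simp add: sum.distrib)
  obtain k where k: "n = k + 4" using n by (metis add.commute le_add_diff_inverse)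
  define a where "a = L 0 + L (n + 1)"
  have t2: "t = a + S" using tS a_def by simp
  have C: "2 * n * m + n * a + 4 * S \<le> 2 * n * t" using B0 B1 unfolding a_def by (simp add: algebra_simps)
  have "k * a \<le> 2 * (k * a)" by simp
  then show ?thesis using C unfolding t2 k by (simp add: algebra_simps)
qed

lemma Var_pow: "(Var j :: 'k::comm_semiring_1 mpol) ^ c = Poly_Mapping.single (Poly_Mapping.single j c) 1"
  by (induction c) (simp_all add: Var_def mult_single single_add[symmetric] add.commute)

lemma mono_pow:
  "\<exists>v. ((Var i * Var i' :: 'k::comm_semiring_1 mpol) ^ K) = Poly_Mapping.single v 1 \<and> Poly_Mapping.keys v \<subseteq> {i, i'}"
proof (induction K)
  case 0 then show ?case by (intro exI[of _ 0]) simp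
next
  case (Suc K)
  then obtain v where v: "(Var i * Var i' :: 'k mpol) ^ K = Poly_Mapping.single v 1" "Poly_Mapping.keys v \<subseteq> {i, i'}" by blast
  have "(Var i * Var i' :: 'k mpol) ^ Suc K = Poly_Mapping.single (v + (Poly_Mapping.single i 1 + Poly_Mapping.single i' 1)) 1"
    using v(1) by (simp add: Var_def mult_single mult.commute)
  moreover have "Poly_Mapping.keys (v + (Poly_Mapping.single i 1 + Poly_Mapping.single i' (1::nat))) \<subseteq> {i, i'}"
    using v(2) by (auto simp: keys_add_nat)
  ultimately show ?case by blast
qed

lemma prod_list_concat_rep: "prod_list (concat (replicate c xs)) = (prod_list xs :: 'a::comm_monoid_mult) ^ c"
  by (induction c) simp_all

lemma upper_bound:
  assumes n: "n \<ge> 4"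
  shows "\<exists>f\<in>symbolic_power (polys {0..n+1}) (stanley_reisner {0..n+1} (bipyramid n) :: 'k::field mpol set) m.
           f \<noteq> 0 \<and> homogeneous_of (n * (m div (n - 2) + 1)) f"
proof -
  have n3: "n \<ge> 3" using n by simp
  define c where "c = m div (n - 2) + 1"
  define f where "f = (\<Prod>j\<in>{1..n}. Var j :: 'k mpol) ^ c"
  define v where "v = (\<Sum>j\<in>{1..n}. Poly_Mapping.single j c)"
  have fv: "f = Poly_Mapping.single v 1"
    unfolding f_def v_def prod_power_distrib Var_pow by (simp add: single_prod)
  have lv: "Poly_Mapping.lookup v x = (if x \<in> {1..n} then c else 0)" for x
    unfolding v_def by (simp add: lookup_sum lookup_single when_def)
  have kv: "Poly_Mapping.keys v \<subseteq> {1..n}" by (auto simp: in_keys_iff lv split: if_splits)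
  have "mon_deg v = (\<Sum>j\<in>{1..n}. Poly_Mapping.lookup v j)" using mon_deg_eq[OF _ kv] by simp
  also have "\<dots> = n * c" by (simp add: lv)
  finally have dv: "mon_deg v = n * c" .
  have hom: "homogeneous_of (n * c) f" unfolding homogeneous_of_def fv using dv by simp
  have "Poly_Mapping.keys f = {v}" unfolding fv by simp
  then have fnz: "f \<noteq> 0" by auto
  have fR: "f \<in> polys {0..n+1}" unfolding f_def by (intro polys_power polys_prod polys_Var) auto
  have Kge: "m \<le> (n - 2) * c"
  proof -
    define d where "d = n - 2"
    have "m = d * (m div d) + m mod d" by simp
    moreover have "m mod d < d" using n unfolding d_def by simp
    moreover have "d * (m div d + 1) = d * (m div d) + d" by simp
    ultimately show ?thesis unfolding c_def d_def[symmetric] by linarith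
  qed
  have "\<forall>P\<in>Ass (polys {0..n+1}) (stanley_reisner {0..n+1} (bipyramid n)).
          \<exists>s\<in>polys {0..n+1} - P. s * f \<in> ideal_pow (polys {0..n+1}) (stanley_reisner {0..n+1} (bipyramid n)) m"
  proof
    fix P assume P: "P \<in> Ass (polys {0..n+1}) (stanley_reisner {0..n+1} (bipyramid n) :: 'k mpol set)"
    obtain G where G: "G \<in> bipyramid_facets n" "P \<subseteq> PF n G" using Ass_sub[OF P n3] by blast
    obtain a i i' where Gf: "G = insert a {i, i'}" "a = 0 \<or> a = n + 1" "i \<in> {1..n}" "i' \<in> {1..n}" "i \<noteq> i'"
      using facet_form[OF G(1) n3] by blast
    define X where "X = (Var i * Var i' :: 'k mpol)"
    define K where "K = (n - 2) * c"
    define s where "s = X ^ K"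
    have XR: "X \<in> polys {0..n+1}" unfolding X_def using Gf by (intro polys_mult polys_Var) auto
    have sR: "s \<in> polys {0..n+1}" unfolding s_def using XR by (rule polys_power)
    obtain w where w: "s = Poly_Mapping.single w 1" "Poly_Mapping.keys w \<subseteq> {i, i'}"
      using mono_pow[of i i' K] unfolding s_def X_def by blast
    have "wF n G w = 0" by (rule wF_sub_zero) (use w(2) Gf(1) in auto)
    then have "s \<notin> Wt (wF n G) 1" unfolding w(1) Wt_def by simp
    then have sP: "s \<notin> P" using G(2) unfolding PF_def by blast
    define Js where "Js = {1..n} - {i, i'}"
    have finJ: "finite Js" unfolding Js_def by simp
    have cJ: "card Js = n - 2" unfolding Js_def using Gf by (simp add: card_Diff_subset)
    define js where "js = sorted_list_of_set Js"
    have js: "distinct js" "set js = Js" "length js = n - 2" unfolding js_def using finJ cJ by auto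
    define h where "h j = (sqfree_monomial {i, i', j} :: 'k mpol)" for j
    define L where "L = concat (replicate c (map h js))"
    have lenL: "length L = K" unfolding L_def K_def using js(3) by (simp add: length_concat sum_list_replicate mult.commute)
    have hJ: "h j = X * Var j" if "j \<in> Js" for j
      using that Gf unfolding h_def X_def sqfree_monomial_def Js_def by (auto simp: mult.assoc)
    have hI: "h j \<in> stanley_reisner {0..n+1} (bipyramid n)" if "j \<in> Js" for j
    proof -
      have "1 * h j \<in> stanley_reisner {0..n+1} (bipyramid n)"
        unfolding stanley_reisner_def h_def
      proof (rule gen_single)
        show "(1::'k mpol) \<in> polys {0..n+1}" by (rule polys_one)
        have j: "j \<in> {1..n}" "j \<noteq> i" "j \<noteq> i'" using that unfolding Js_def by auto
        have "{i, i', j} \<notin> bipyramid n" using three_nonface[of i n i' j] j Gf n3 by blast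
        moreover have "{i, i', j} \<subseteq> {0..n+1}" using j Gf by auto
        ultimately show "sqfree_monomial {i, i', j} \<in> {sqfree_monomial \<tau> |\<tau>. \<tau> \<subseteq> {0..n + 1} \<and> \<tau> \<notin> bipyramid n}"
          by blast
      qed
      then show ?thesis by simp
    qed
    have LI: "set L \<subseteq> stanley_reisner {0..n+1} (bipyramid n)"
      unfolding L_def using hI js(2) by (cases "c = 0") auto
    have LR: "set L \<subseteq> polys {0..n+1}" using LI I_eq_N unfolding NN_def by blast
    define Y where "Y = (\<Prod>j\<in>Js. Var j :: 'k mpol)"
    have pL: "prod_list L = X ^ K * Y ^ c"
    proof -
      have "prod_list L = (\<Prod>j\<in>Js. h j) ^ c" unfolding L_def prod_list_concat_rep
        using prod.distinct_set_conv_list[OF js(1), of h] js(2) by simp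
      also have "(\<Prod>j\<in>Js. h j) = (\<Prod>j\<in>Js. X * Var j)" using hJ by (rule prod.cong[OF refl])
      also have "\<dots> = X ^ (n - 2) * Y" unfolding Y_def by (simp add: prod.distrib cJ)
      finally show ?thesis unfolding K_def by (simp add: power_mult_distrib power_mult)
    qed
    have fXY: "f = (X * Y) ^ c"
    proof -
      have e: "{1..n} = insert i (insert i' Js)" unfolding Js_def using Gf by auto
      have ni: "i \<notin> insert i' Js" "i' \<notin> Js" unfolding Js_def using Gf by auto
      have "(\<Prod>j\<in>{1..n}. Var j :: 'k mpol) = X * Y"
        unfolding X_def Y_def e using ni finJ by (simp add: mult.assoc)
      then show ?thesis unfolding f_def by simp
    qed
    have sf: "s * f = (X ^ c * prod_list (drop m L)) * prod_list (take m L)"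
    proof -
      have "s * f = X ^ c * prod_list L" unfolding s_def fXY pL by (simp add: power_mult_distrib algebra_simps)
      also have "prod_list L = prod_list (take m L) * prod_list (drop m L)"
        by (metis append_take_drop_id prod_list.append)
      finally show ?thesis by (simp add: algebra_simps)
    qed
    have rR: "X ^ c * prod_list (drop m L) \<in> polys {0..n+1}"
      using LR set_drop_subset[of m L] by (intro polys_mult polys_power XR polys_prod_list) auto
    have gg: "prod_list (take m L) \<in> {prod_list xs |xs. length xs = m \<and> set xs \<subseteq> stanley_reisner {0..n+1} (bipyramid n)}"
      using lenL Kge K_def LI set_take_subset[of m L] by (intro CollectI exI[of _ "take m L"]) auto
    have "s * f \<in> ideal_pow (polys {0..n+1}) (stanley_reisner {0..n+1} (bipyramid n)) m"
      unfolding sf ideal_pow_def by (rule gen_single[OF rR gg])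
    then show "\<exists>s\<in>polys {0..n+1} - P. s * f \<in> ideal_pow (polys {0..n+1}) (stanley_reisner {0..n+1} (bipyramid n)) m"
      using sR sP by blast
  qed
  then have "f \<in> symbolic_power (polys {0..n+1}) (stanley_reisner {0..n+1} (bipyramid n) :: 'k mpol set) m"
    unfolding symbolic_power_def using fR by blast
  then show ?thesis using fnz hom unfolding c_def by blast
qed

theorem theorem1p1:
  fixes n :: nat
  assumes "n \<ge> 4"
  shows "(\<lambda>m. real (alpha (symbolic_power (polys {0..n+1})
                (stanley_reisner {0..n+1} (bipyramid n) :: 'k::field mpol set) m)) / real m)
         \<longlonglongrightarrow> real n / (real n - 2)"
proof -
  define A where "A m = alpha (symbolic_power (polys {0..n+1})
                (stanley_reisner {0..n+1} (bipyramid n) :: 'k::field mpol set) m)" for m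
  have up: "A m \<le> n * (m div (n - 2) + 1)" for m
  proof -
    obtain f where "f \<in> symbolic_power (polys {0..n+1}) (stanley_reisner {0..n+1} (bipyramid n) :: 'k mpol set) m"
      "f \<noteq> 0" "homogeneous_of (n * (m div (n - 2) + 1)) f"
      using upper_bound[OF assms, of m] by blast
    then show ?thesis unfolding A_def alpha_def by (intro Least_le) blast
  qed
  have lo: "2 * n * m \<le> (2 * n - 4) * A m" for m
  proof -
    obtain f where "f \<in> symbolic_power (polys {0..n+1}) (stanley_reisner {0..n+1} (bipyramid n) :: 'k mpol set) m"
      "f \<noteq> 0" "homogeneous_of (n * (m div (n - 2) + 1)) f"
      using upper_bound[OF assms, of m] by blast
    then have "\<exists>t. \<exists>p\<in>symbolic_power (polys {0..n+1}) (stanley_reisner {0..n+1} (bipyramid n) :: 'k mpol set) m.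
                  p \<noteq> 0 \<and> homogeneous_of t p" by blast
    then have "\<exists>p\<in>symbolic_power (polys {0..n+1}) (stanley_reisner {0..n+1} (bipyramid n) :: 'k mpol set) m.
                  p \<noteq> 0 \<and> homogeneous_of (A m) p"
      unfolding A_def alpha_def by (rule LeastI_ex)
    then show ?thesis using lower_bound[OF assms] by blast
  qed
  have n2: "real n - 2 > 0" using assms by simp
  let ?L = "real n / (real n - 2)"
  have ev1: "\<forall>\<^sub>F m in sequentially. ?L \<le> real (A m) / real m"
  proof (rule eventually_sequentiallyI[of 1])
    fix m :: nat assume m: "1 \<le> m"
    have "real (2 * n * m) \<le> real ((2 * n - 4) * A m)" using lo[of m] by (simp only: of_nat_le_iff)
    moreover have "real (2 * n - 4) = 2 * real n - 4" using assms by simp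
    ultimately have "2 * real n * real m \<le> (2 * real n - 4) * real (A m)" by simp
    then have h: "real n * real m \<le> (real n - 2) * real (A m)" by (simp add: algebra_simps)
    have mp: "real m > 0" using m by simp
    show "?L \<le> real (A m) / real m"
      using h mp n2 by (simp add: field_simps)
  qed
  have ev2: "\<forall>\<^sub>F m in sequentially. real (A m) / real m \<le> ?L + real n / real m"
  proof (rule eventually_sequentiallyI[of 1])
    fix m :: nat assume m: "1 \<le> m"
    have mp: "real m > 0" using m by simp
    have d: "real (n - 2) = real n - 2" using assms by simp
    have "m div (n - 2) * (n - 2) \<le> m" by (rule div_times_less_eq_dividend)
    then have "real (m div (n - 2)) * (real n - 2) \<le> real m"
      using d by (metis of_nat_le_iff of_nat_mult)
    then have q: "real (m div (n - 2)) \<le> real m / (real n - 2)" using n2 by (simp add: field_simps)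
    have "real (A m) \<le> real n * (real (m div (n - 2)) + 1)" using up[of m] by (metis of_nat_le_iff of_nat_mult of_nat_add of_nat_1)
    also have "\<dots> \<le> real n * (real m / (real n - 2) + 1)" using q by (intro mult_left_mono) auto
    finally have "real (A m) / real m \<le> real n * (real m / (real n - 2) + 1) / real m"
      using mp by (intro divide_right_mono) auto
    also have "\<dots> = ?L + real n / real m" using mp n2 by (simp add: field_simps)
    finally show "real (A m) / real m \<le> ?L + real n / real m" .
  qed
  have lim2: "(\<lambda>m. ?L + real n / real m) \<longlonglongrightarrow> ?L + 0"
    by (intro tendsto_add tendsto_const lim_const_over_n)
  have "(\<lambda>m. real (A m) / real m) \<longlonglongrightarrow> ?L"
    using tendsto_sandwich[OF ev1 ev2 tendsto_const] lim2 by simp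
  then show ?thesis unfolding A_def .
qed

end
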